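(* Let $G$ be any graph with $n$ nodes and consider the balancing circuit model or the random matching model. Let $x^{(0)}$ be any non-negative integer load vector with $\| x^{(0)} \|_{1} \leq n^{1-\epsilon}$, where $\epsilon > 0$ is a constant. Then the discrepancy after $\tau_{\operatorname{cont}}(1,n^{-1})$ rounds is at most $9/\epsilon$ with probability at least $1-2 n^{-1}$.
   Context: A matching $\mathbf{M}^{(t)}\subseteq E$ of $G=(V,E)$ is identified with the symmetric matrix with entries $1/2$ on $(u,u),(v,v),(u,v),(v,u)$ for $\{u,v\}\in\mathbf{M}^{(t)}$, $1$ on the diagonal for unmatched nodes, $0$ elsewhere. Discrete protocol: for each $\{u,v\}\in\mathbf{M}^{(t)}$ both nodes get $\lfloor (x^{(t-1)}_u+x^{(t-1)}_v)/2\rfloor$ tokens and the excess token (if the sum is odd) goes to $u$ or $v$ with probability $1/2$ each, independently; unmatched nodes keep their load. Continuous process: $\xi^{(t)}=\xi^{(t-1)}\mathbf{M}^{(t)}$. Balancing circuit model: $d$ fixed matchings applied periodically. Random matching model: a random matching each round, independent across rounds, each edge present with probability at least $p_{\min}=\Omega(1/\Delta)$, $\Delta$ the maximum degree. Discrepancy: $\max_{u,v}|x_u-x_v|$. $[t_1,t_2]$ is $(K,\epsilon)$-smoothing if every $\xi^{(t_1)}\in\mathbb{R}^n$ of discrepancy at most $K$ gives $\xi^{(t_2)}$ of discrepancy at most $\epsilon$. $\tau_{\operatorname{cont}}(K,\epsilon)$ is the minimum $t$ with $[0,t]$ $(K,\epsilon)$-smoothing (balancing circuit), resp. the minimum $t$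 such that $[0,t]$ is $(K,\epsilon)$-smoothing with probability at least $1-n^{-1}$ (random matching). *)

theory Defs
  imports "HOL-Probability.Probability"
begin

definition simple_graph :: "nat \<Rightarrow> nat set set \<Rightarrow> bool" where
  "simple_graph n E \<longleftrightarrow> (\<forall>e\<in>E. \<exists>u v. e = {u, v} \<and> u \<noteq> v \<and> u < n \<and> v < n)"

definition degree :: "nat set set \<Rightarrow> nat \<Rightarrow> nat" where
  "degree E u = card {e \<in> E. u \<in> e}"

definition max_degree :: "nat \<Rightarrow> nat set set \<Rightarrow> nat" where
  "max_degree n E = Max (degree E ` {..<n})"

definition is_matching :: "nat set set \<Rightarrow> nat set set \<Rightarrow> bool" where
  "is_matching E M \<longleftrightarrow> M \<subseteq> E \<and> (\<forall>e1\<in>M. \<forall>e2\<in>M. e1 \<noteq> e2 \<longrightarrow> e1 \<inter> e2 = {})"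

definition matching_matrix :: "nat set set \<Rightarrow> nat \<Rightarrow> nat \<Rightarrow> real" where
  "matching_matrix M u v =
     (if u = v then (if \<exists>w. {u, w} \<in> M then 1/2 else 1)
      else if {u, v} \<in> M then 1/2 else 0)"

definition cont_step :: "nat \<Rightarrow> nat set set \<Rightarrow> (nat \<Rightarrow> real) \<Rightarrow> (nat \<Rightarrow> real)" where
  "cont_step n M \<xi> = (\<lambda>v. \<Sum>u<n. \<xi> u * matching_matrix M u v)"

definition cont_run :: "nat \<Rightarrow> nat set set list \<Rightarrow> (nat \<Rightarrow> real) \<Rightarrow> (nat \<Rightarrow> real)" where
  "cont_run n ms \<xi> = foldl (\<lambda>\<zeta> M. cont_step n M \<zeta>) \<xi> ms"

definition discrepancy :: "nat \<Rightarrow> (nat \<Rightarrow> real) \<Rightarrow> real" where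
  "discrepancy n x = Max {\<bar>x u - x v\<bar> | u v. u < n \<and> v < n}"

definition smoothing :: "nat \<Rightarrow> nat set set list \<Rightarrow> real \<Rightarrow> real \<Rightarrow> bool" where
  "smoothing n ms K eps \<longleftrightarrow>
     (\<forall>\<xi>. discrepancy n \<xi> \<le> K \<longrightarrow> discrepancy n (cont_run n ms \<xi>) \<le> eps)"

definition bc_schedule :: "(nat \<Rightarrow> nat set set) \<Rightarrow> nat \<Rightarrow> nat \<Rightarrow> nat set set list" where
  "bc_schedule Ms d t = map (\<lambda>s. Ms (s mod d)) [0..<t]"

definition tau_cont_bc :: "nat \<Rightarrow> (nat \<Rightarrow> nat set set) \<Rightarrow> nat \<Rightarrow> real \<Rightarrow> real \<Rightarrow> nat" where
  "tau_cont_bc n Ms d K eps = (LEAST t. smoothing n (bc_schedule Ms d t) K eps)"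

fun iid_matchings :: "nat set set pmf \<Rightarrow> nat \<Rightarrow> nat set set list pmf" where
  "iid_matchings D 0 = return_pmf []"
| "iid_matchings D (Suc t) =
     bind_pmf (iid_matchings D t) (\<lambda>ms. map_pmf (\<lambda>M. ms @ [M]) D)"

definition rm_smoothing_whp :: "nat \<Rightarrow> nat set set pmf \<Rightarrow> real \<Rightarrow> real \<Rightarrow> nat \<Rightarrow> bool" where
  "rm_smoothing_whp n D K eps t \<longleftrightarrow>
     measure_pmf.prob (iid_matchings D t) {ms. smoothing n ms K eps} \<ge> 1 - 1 / real n"

definition tau_cont_rm :: "nat \<Rightarrow> nat set set pmf \<Rightarrow> real \<Rightarrow> real \<Rightarrow> nat" where
  "tau_cont_rm n D K eps = (LEAST t. rm_smoothing_whp n D K eps t)"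

(* discrete protocol, one round with matching M and coin flips b (one per edge):
   both endpoints get floor((x_u+x_v)/2); if the sum is odd the excess token goes
   to the smaller endpoint of e if b e, to the larger one otherwise. *)
definition disc_step :: "nat set set \<Rightarrow> (nat set \<Rightarrow> bool) \<Rightarrow> (nat \<Rightarrow> int) \<Rightarrow> (nat \<Rightarrow> int)" where
  "disc_step M b x = (\<lambda>w.
     if \<exists>v. {w, v} \<in> M then
       (let v = (THE v. {w, v} \<in> M); s = x w + x v
        in s div 2 + (if odd s \<and> (b {w, v} \<longleftrightarrow> w = min w v) then 1 else 0))
     else x w)"

definition disc_step_pmf :: "nat set set \<Rightarrow> (nat \<Rightarrow> int) \<Rightarrow> (nat \<Rightarrow> int) pmf" where
  "disc_step_pmf M x =
     map_pmf (\<lambda>b. disc_step M b x) (Pi_pmf M False (\<lambda>_. bernoulli_pmf (1/2)))"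

(* discrete process: round t+1 uses a matching drawn from Sched t, independently of
   everything before; the coin flips are fresh and independent. *)
fun disc_run :: "(nat \<Rightarrow> nat set set pmf) \<Rightarrow> (nat \<Rightarrow> int) \<Rightarrow> nat \<Rightarrow> (nat \<Rightarrow> int) pmf" where
  "disc_run Sched x0 0 = return_pmf x0"
| "disc_run Sched x0 (Suc t) =
     bind_pmf (disc_run Sched x0 t) (\<lambda>x. bind_pmf (Sched t) (\<lambda>M. disc_step_pmf M x))"

definition int_discrepancy :: "nat \<Rightarrow> (nat \<Rightarrow> int) \<Rightarrow> real" where
  "int_discrepancy n x = discrepancy n (\<lambda>u. real_of_int (x u))"

end

theory Submission
  imports Defs
begin

lemma mm_sym: "matching_matrix M u v = matching_matrix M v u"
  unfolding matching_matrix_def by (auto simp: insert_commute)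

lemma mm_nonneg: "matching_matrix M u v \<ge> 0"
  unfolding matching_matrix_def by auto

lemma cont_step_dual:
  "(\<Sum>u<n. cont_step n M \<xi> u * \<eta> u) = (\<Sum>u<n. \<xi> u * cont_step n M \<eta> u)"
proof -
  have "(\<Sum>u<n. cont_step n M \<xi> u * \<eta> u) = (\<Sum>u<n. \<Sum>v<n. \<xi> v * matching_matrix M v u * \<eta> u)"
    unfolding cont_step_def by (simp add: sum_distrib_right)
  also have "\<dots> = (\<Sum>v<n. \<Sum>u<n. \<xi> v * matching_matrix M v u * \<eta> u)"
    by (rule sum.swap)
  also have "\<dots> = (\<Sum>v<n. \<xi> v * cont_step n M \<eta> v)"
    unfolding cont_step_def by (simp add: sum_distrib_left mm_sym[of M] mult_ac)
  finally show ?thesis .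
qed

lemma cont_run_snoc: "cont_run n (ms @ [M]) \<xi> = cont_step n M (cont_run n ms \<xi>)"
  by (simp add: cont_run_def)

lemma cont_run_Cons: "cont_run n (M # ms) \<xi> = cont_run n ms (cont_step n M \<xi>)"
  by (simp add: cont_run_def)

lemma cont_run_dual:
  "(\<Sum>u<n. cont_run n ms \<xi> u * \<eta> u) = (\<Sum>u<n. \<xi> u * cont_run n (rev ms) \<eta> u)"
proof (induction ms arbitrary: \<eta> rule: rev_induct)
  case Nil then show ?case by (simp add: cont_run_def)
next
  case (snoc M ms)
  show ?case
    by (simp add: cont_run_snoc cont_run_Cons cont_step_dual snoc.IH)
qed

lemma cont_step_nonneg: "(\<And>u. \<xi> u \<ge> 0) \<Longrightarrow> cont_step n M \<xi> v \<ge> 0"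
  unfolding cont_step_def by (intro sum_nonneg mult_nonneg_nonneg mm_nonneg) auto

lemma cont_run_nonneg: "(\<And>u. \<xi> u \<ge> 0) \<Longrightarrow> cont_run n ms \<xi> v \<ge> 0"
proof (induction ms arbitrary: \<xi>)
  case Nil then show ?case by (simp add: cont_run_def)
next
  case (Cons M ms) then show ?case by (simp add: cont_run_Cons cont_step_nonneg)
qed

lemma edge_form:
  assumes "simple_graph n E" "is_matching E M" "e \<in> M"
  shows "\<exists>a c. e = {a, c} \<and> a \<noteq> c \<and> a < n \<and> c < n"
proof -
  have "e \<in> E" using assms(2,3) unfolding is_matching_def by auto
  then show ?thesis using assms(1) unfolding simple_graph_def by auto
qed

lemma partner_unique:
  assumes "simple_graph n E" "is_matching E M" "{w, v} \<in> M" "{w, v'} \<in> M"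
  shows "v = v'"
proof -
  have "{w, v} \<inter> {w, v'} \<noteq> {}" by blast
  then have "{w, v} = {w, v'}"
    using assms(2-4) unfolding is_matching_def by metis
  moreover have "w \<noteq> v" using edge_form[OF assms(1,2,3)] by (auto simp: doubleton_eq_iff)
  ultimately show ?thesis by (auto simp: doubleton_eq_iff)
qed

lemma partner_the:
  assumes "simple_graph n E" "is_matching E M" "{w, v} \<in> M"
  shows "(THE v. {w, v} \<in> M) = v"
  using assms partner_unique[OF assms(1,2)] by (intro the_equality) auto

lemma partner_props:
  assumes "simple_graph n E" "is_matching E M" "{w, v} \<in> M"
  shows "w \<noteq> v" "w < n" "v < n"
  using edge_form[OF assms] by (auto simp: doubleton_eq_iff)

lemma cont_step_matched:
  assumes "simple_graph n E" "is_matching E M" "{u, w} \<in> M"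
  shows "cont_step n M q u = (q u + q w) / 2"
proof -
  note p = partner_props[OF assms]
  have "cont_step n M q u = (\<Sum>v\<in>{u, w}. q v * matching_matrix M v u)"
    unfolding cont_step_def
  proof (rule sum.mono_neutral_right)
    show "\<forall>v\<in>{..<n} - {u, w}. q v * matching_matrix M v u = 0"
    proof
      fix v assume v: "v \<in> {..<n} - {u, w}"
      have "{u, v} \<notin> M" using partner_unique[OF assms(1,2,3)] v by auto
      then show "q v * matching_matrix M v u = 0"
        using v unfolding matching_matrix_def by (auto simp: insert_commute)
    qed
  qed (use p in auto)
  also have "\<dots> = (q u + q w) / 2"
    using p assms(3) by (auto simp: matching_matrix_def insert_commute)
  finally show ?thesis .
qed

lemma cont_step_unmatched:
  assumes "\<not> (\<exists>w. {u, w} \<in> M)" "u < n"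
  shows "cont_step n M q u = q u"
proof -
  have "cont_step n M q u = (\<Sum>v\<in>{u}. q v * matching_matrix M v u)"
    unfolding cont_step_def
  proof (rule sum.mono_neutral_right)
    show "\<forall>v\<in>{..<n} - {u}. q v * matching_matrix M v u = 0"
      using assms(1) by (auto simp: matching_matrix_def insert_commute)
  qed (use assms in auto)
  also have "\<dots> = q u" using assms(1) by (simp add: matching_matrix_def)
  finally show ?thesis .
qed

lemma cont_step_one:
  assumes "simple_graph n E" "is_matching E M" "u < n"
  shows "cont_step n M (\<lambda>_. 1) u = 1"
proof (cases "\<exists>w. {u, w} \<in> M")
  case True
  then obtain w where "{u, w} \<in> M" by blast
  then show ?thesis using cont_step_matched[OF assms(1,2), of u w "\<lambda>_. 1"] by simp
next
  case False
  then show ?thesis using cont_step_unmatched[OF _ assms(3)] by simp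
qed

lemma cont_step_sum:
  assumes "simple_graph n E" "is_matching E M"
  shows "(\<Sum>u<n. cont_step n M \<xi> u) = (\<Sum>u<n. \<xi> u)"
  using cont_step_dual[of n M \<xi> "\<lambda>_. 1"] cont_step_one[OF assms] by simp

lemma cont_run_sum:
  assumes "simple_graph n E" "\<forall>M\<in>set ms. is_matching E M"
  shows "(\<Sum>u<n. cont_run n ms \<xi> u) = (\<Sum>u<n. \<xi> u)"
  using assms(2)
proof (induction ms arbitrary: \<xi>)
  case Nil then show ?case by (simp add: cont_run_def)
next
  case (Cons M ms) then show ?case by (simp add: cont_run_Cons cont_step_sum[OF assms(1)])
qed

lemma disc_le_iff:
  assumes "n \<ge> 1"
  shows "discrepancy n x \<le> K \<longleftrightarrow> (\<forall>a<n. \<forall>b<n. \<bar>x a - x b\<bar> \<le> K)"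
proof -
  have eq: "{\<bar>x u - x v\<bar> | u v. u < n \<and> v < n} = (\<lambda>(u,v). \<bar>x u - x v\<bar>) ` ({..<n} \<times> {..<n})"
    by auto
  have "(0, 0) \<in> {..<n} \<times> {..<n}" using assms by auto
  then have ne: "{..<n} \<times> {..<n} \<noteq> {}" by blast
  show ?thesis unfolding discrepancy_def eq
  proof (subst Max_le_iff)
    show "finite ((\<lambda>(u,v). \<bar>x u - x v\<bar>) ` ({..<n} \<times> {..<n}))" by auto
    show "(\<lambda>(u,v). \<bar>x u - x v\<bar>) ` ({..<n} \<times> {..<n}) \<noteq> {}" using ne by blast
  qed auto
qed

lemma entry_bound:
  assumes "simple_graph n E" "\<forall>M\<in>set ms. is_matching E M" "n \<ge> 1"
    and sm: "smoothing n ms 1 (1 / real n)" and "u < n" "w < n"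
  shows "cont_run n ms (\<lambda>v. if v = u then 1 else 0) w \<le> 2 / real n"
proof -
  define \<zeta> where "\<zeta> = cont_run n ms (\<lambda>v. if v = u then 1 else 0)"
  have "discrepancy n (\<lambda>v. if v = u then 1 else (0::real)) \<le> 1"
    using assms(3) by (subst disc_le_iff) auto
  then have "discrepancy n \<zeta> \<le> 1 / real n" using sm unfolding smoothing_def \<zeta>_def by blast
  then have d: "\<forall>a<n. \<forall>b<n. \<bar>\<zeta> a - \<zeta> b\<bar> \<le> 1 / real n" using disc_le_iff assms(3) by blast
  have s: "(\<Sum>v<n. \<zeta> v) = 1"
    unfolding \<zeta>_def using cont_run_sum[OF assms(1,2)] assms(5) by simp
  have "(\<Sum>v<n. \<zeta> w) \<le> (\<Sum>v<n. \<zeta> v + 1 / real n)"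
    by (intro sum_mono) (use d assms(6) in fastforce)
  then have "real n * \<zeta> w \<le> 1 + real n * (1 / real n)" using s by (simp add: sum.distrib)
  then have "real n * \<zeta> w \<le> 2" using assms(3) by simp
  then show ?thesis unfolding \<zeta>_def using assms(3) by (simp add: field_simps)
qed



lemma disc_step_matched:
  assumes "simple_graph n E" "is_matching E M" "{w, v} \<in> M"
  shows "disc_step M b x w = (x w + x v) div 2 +
           (if odd (x w + x v) \<and> (b {w, v} \<longleftrightarrow> w = min w v) then 1 else 0)"
proof -
  have "\<exists>v. {w, v} \<in> M" using assms(3) by blast
  then show ?thesis unfolding disc_step_def using partner_the[OF assms] by (simp add: Let_def)
qed

lemma disc_step_unmatched:
  assumes "\<not> (\<exists>v. {w, v} \<in> M)"
  shows "disc_step M b x w = x w"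
  using assms unfolding disc_step_def by simp

lemma disc_step_local:
  assumes "simple_graph n E" "is_matching E M" "e \<in> M" "u \<in> e"
  shows "disc_step M b x u = disc_step M (\<lambda>_. b e) x u"
proof -
  obtain a c where e: "e = {a, c}" using edge_form[OF assms(1-3)] by blast
  obtain v where uv: "e = {u, v}" using assms(4) e by auto
  show ?thesis using disc_step_matched[OF assms(1,2), of u v] assms(3) uv by simp
qed

lemma disc_step_nonneg:
  assumes "simple_graph n E" "is_matching E M" "\<forall>u<n. x u \<ge> 0" "u < n"
  shows "disc_step M b x u \<ge> 0"
proof (cases "\<exists>v. {u, v} \<in> M")
  case True
  then obtain v where v: "{u, v} \<in> M" by blast
  have "v < n" using partner_props[OF assms(1,2) v] by simp
  then have "x u + x v \<ge> 0" using assms(3,4) by simp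
  then show ?thesis using disc_step_matched[OF assms(1,2) v] by simp
next
  case False
  then show ?thesis using disc_step_unmatched assms by simp
qed

lemma finite_E:
  assumes "simple_graph n E"
  shows "finite E"
proof -
  have "E \<subseteq> Pow {..<n}" using assms unfolding simple_graph_def by auto
  then show ?thesis by (rule finite_subset) auto
qed

lemma prod_split:
  assumes "simple_graph n E" "is_matching E M"
  shows "(\<Prod>u<n. f u) = (\<Prod>e\<in>M. \<Prod>u\<in>e. f u) * (\<Prod>u\<in>{..<n} - \<Union>M. f u)"
proof -
  have fin: "finite M" using finite_E[OF assms(1)] assms(2) unfolding is_matching_def
    using finite_subset by blast
  have sub: "\<Union>M \<subseteq> {..<n}"
    using edge_form[OF assms] by blast
  have fe: "\<forall>e\<in>M. finite e" using edge_form[OF assms] by fastforce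
  have dj: "\<forall>A\<in>M. \<forall>B\<in>M. A \<noteq> B \<longrightarrow> A \<inter> B = {}" using assms(2) unfolding is_matching_def by blast
  have "(\<Prod>u<n. f u) = (\<Prod>u\<in>{..<n} - \<Union>M. f u) * (\<Prod>u\<in>\<Union>M. f u)"
    by (rule prod.subset_diff[OF sub]) auto
  also have "(\<Prod>u\<in>\<Union>M. f u) = (\<Prod>e\<in>M. \<Prod>u\<in>e. f u)"
    using prod.Union_disjoint[OF fe dj] by simp
  finally show ?thesis by (simp add: mult.commute)
qed

lemma unmatched_of_notin:
  assumes "u \<notin> \<Union>M"
  shows "\<not> (\<exists>v. {u, v} \<in> M)"
  using assms by blast

lemma edge_arith:
  fixes \<alpha> \<beta> :: real
  assumes "0 \<le> \<alpha>" "0 \<le> \<beta>"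
  shows "(\<alpha> ^ (S div 2 + (if odd S then 1 else 0)) * \<beta> ^ (S div 2)
          + \<alpha> ^ (S div 2) * \<beta> ^ (S div 2 + (if odd S then 1 else 0))) / 2 \<le> ((\<alpha> + \<beta>) / 2) ^ S"
proof -
  define h where "h = S div 2"
  define \<gamma> where "\<gamma> = (\<alpha> + \<beta>) / 2"
  have am: "\<alpha> * \<beta> \<le> \<gamma> ^ 2"
  proof -
    have "0 \<le> (\<alpha> - \<beta>)^2" by simp
    then show ?thesis unfolding \<gamma>_def by (simp add: power2_eq_square field_simps)
  qed
  have ab: "(\<alpha> * \<beta>) ^ h \<le> \<gamma> ^ (2 * h)"
    using power_mono[OF am, of h] assms by (simp add: power_mult)
  have g0: "0 \<le> \<gamma>" unfolding \<gamma>_def using assms by simp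
  show ?thesis
  proof (cases "odd S")
    case True
    then have S: "S = 2 * h + 1" unfolding h_def by presburger
    have "(\<alpha> ^ (h + 1) * \<beta> ^ h + \<alpha> ^ h * \<beta> ^ (h + 1)) / 2 = (\<alpha> * \<beta>) ^ h * \<gamma>"
      unfolding \<gamma>_def by (simp add: power_mult_distrib field_simps)
    also have "\<dots> \<le> \<gamma> ^ (2 * h) * \<gamma>" by (rule mult_right_mono[OF ab g0])
    also have "\<dots> = \<gamma> ^ S" using S by simp
    finally show ?thesis using True unfolding h_def \<gamma>_def by simp
  next
    case False
    then have S: "S = 2 * h" unfolding h_def by presburger
    have "(\<alpha> ^ h * \<beta> ^ h + \<alpha> ^ h * \<beta> ^ h) / 2 = (\<alpha> * \<beta>) ^ h"
      by (simp add: power_mult_distrib)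
    also have "\<dots> \<le> \<gamma> ^ S" using ab S by simp
    finally show ?thesis using False unfolding h_def \<gamma>_def by simp
  qed
qed

definition Psi :: "nat \<Rightarrow> real \<Rightarrow> (nat \<Rightarrow> int) \<Rightarrow> (nat \<Rightarrow> real) \<Rightarrow> real" where
  "Psi n z x q = (\<Prod>u<n. (1 + z * q u) ^ nat (x u))"


lemma nat_disc:
  assumes "simple_graph n E" "is_matching E M" "{a, c} \<in> M" "x a = int X" "x c = int Y"
  shows "nat (disc_step M b x a) = (X + Y) div 2 + (if odd (X + Y) \<and> (b {a, c} \<longleftrightarrow> a = min a c) then 1 else 0)"
proof -
  have "x a + x c = int (X + Y)" using assms(4,5) by simp
  moreover have "int (X + Y) div 2 = int ((X + Y) div 2)" by (simp add: zdiv_int)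
  ultimately show ?thesis using disc_step_matched[OF assms(1-3), of b x]
    by (simp add: nat_add_distrib)
qed

lemma edge_bound:
  assumes sg: "simple_graph n E" and mt: "is_matching E M" and eM: "e \<in> M"
    and xnn: "\<forall>u<n. x u \<ge> 0" and qnn: "\<forall>u. q u \<ge> 0" and z: "z \<ge> 0"
  shows "(\<Prod>u\<in>e. (1 + z * q u) ^ nat (disc_step M (\<lambda>_. True) x u)) / 2
       + (\<Prod>u\<in>e. (1 + z * q u) ^ nat (disc_step M (\<lambda>_. False) x u)) / 2
       \<le> (\<Prod>u\<in>e. (1 + z * cont_step n M q u) ^ nat (x u))"
proof -
  obtain a c where e: "e = {a, c}" "a \<noteq> c" "a < n" "c < n" using edge_form[OF sg mt eM] by blast
  have ac: "{a, c} \<in> M" and ca: "{c, a} \<in> M" using eM e by (auto simp: insert_commute)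
  obtain X where X: "x a = int X" using xnn e(3) by (meson zero_le_imp_eq_int)
  obtain Y where Y: "x c = int Y" using xnn e(4) by (meson zero_le_imp_eq_int)
  define \<alpha> where "\<alpha> = 1 + z * q a"
  define \<beta> where "\<beta> = 1 + z * q c"
  have a0: "0 \<le> \<alpha>" "0 \<le> \<beta>" unfolding \<alpha>_def \<beta>_def using qnn z by auto
  define S where "S = X + Y"
  define h where "h = S div 2"
  define od where "od = (if odd S then 1 else (0::nat))"
  have da: "\<And>b. nat (disc_step M b x a) = h + (if odd S \<and> (b {a, c} \<longleftrightarrow> a = min a c) then 1 else 0)"
    using nat_disc[OF sg mt ac X Y] unfolding h_def S_def by simp
  have dc: "\<And>b. nat (disc_step M b x c) = h + (if odd S \<and> (b {a, c} \<longleftrightarrow> c = min c a) then 1 else 0)"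
    using nat_disc[OF sg mt ca Y X] unfolding h_def S_def by (simp add: insert_commute add.commute)
  have ka: "cont_step n M q a = (q a + q c) / 2" using cont_step_matched[OF sg mt ac] .
  have kc: "cont_step n M q c = (q a + q c) / 2" using cont_step_matched[OF sg mt ca] by simp
  have g: "1 + z * ((q a + q c) / 2) = (\<alpha> + \<beta>) / 2" unfolding \<alpha>_def \<beta>_def by (simp add: field_simps)
  have rhs: "(\<Prod>u\<in>e. (1 + z * cont_step n M q u) ^ nat (x u)) = ((\<alpha> + \<beta>) / 2) ^ S"
  proof -
    have g': "1 + z * (q a + q c) / 2 = (\<alpha> + \<beta>) / 2" using g by simp
    show ?thesis using e(2) by (simp add: e(1) ka kc g' X Y S_def power_add)
  qed
  have lhs: "(\<Prod>u\<in>e. (1 + z * q u) ^ nat (disc_step M (\<lambda>_. True) x u)) / 2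
       + (\<Prod>u\<in>e. (1 + z * q u) ^ nat (disc_step M (\<lambda>_. False) x u)) / 2
     = (\<alpha> ^ (h + od) * \<beta> ^ h + \<alpha> ^ h * \<beta> ^ (h + od)) / 2"
  proof (cases "a < c")
    case True
    then show ?thesis using e(2) unfolding e(1)
      by (simp add: da dc \<alpha>_def \<beta>_def od_def min_def add_divide_distrib)
  next
    case False
    then have "c < a" using e(2) by simp
    then show ?thesis using e(2) unfolding e(1)
      by (simp add: da dc \<alpha>_def \<beta>_def od_def min_def add_divide_distrib mult.commute)
  qed
  show ?thesis unfolding lhs rhs h_def od_def by (rule edge_arith[OF a0])
qed



lemma finite_M:
  assumes "simple_graph n E" "is_matching E M"
  shows "finite M"
  using finite_E[OF assms(1)] assms(2) unfolding is_matching_def using finite_subset by blast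

lemma step_bound:
  assumes sg: "simple_graph n E" and mt: "is_matching E M"
    and xnn: "\<forall>u<n. x u \<ge> 0" and qnn: "\<forall>u. q u \<ge> 0" and z: "z \<ge> 0"
  shows "(\<integral>\<^sup>+b. ennreal (Psi n z (disc_step M b x) q) \<partial>Pi_pmf M False (\<lambda>_. bernoulli_pmf (1/2)))
         \<le> ennreal (Psi n z x (cont_step n M q))"
proof -
  define G where "G = (\<lambda>e \<beta>. \<Prod>u\<in>e. (1 + z * q u) ^ nat (disc_step M (\<lambda>_. \<beta>) x u))"
  define R where "R = (\<Prod>u\<in>{..<n} - \<Union>M. (1 + z * q u) ^ nat (x u))"
  define H where "H = (\<lambda>e. \<Prod>u\<in>e. (1 + z * cont_step n M q u) ^ nat (x u))"
  have finM: "finite M" by (rule finite_M[OF sg mt])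
  have R0: "R \<ge> 0" unfolding R_def using qnn z by (intro prod_nonneg) auto
  have G0: "\<And>e \<beta>. G e \<beta> \<ge> 0" unfolding G_def using qnn z by (intro prod_nonneg) auto
  have eq1: "Psi n z (disc_step M b x) q = (\<Prod>e\<in>M. G e (b e)) * R" for b
  proof -
    have "(\<Prod>e\<in>M. \<Prod>u\<in>e. (1 + z * q u) ^ nat (disc_step M b x u)) = (\<Prod>e\<in>M. G e (b e))"
      unfolding G_def
    proof (intro prod.cong refl)
      fix e u assume "e \<in> M" "u \<in> e"
      show "(1 + z * q u) ^ nat (disc_step M b x u) = (1 + z * q u) ^ nat (disc_step M (\<lambda>_. b e) x u)"
        using disc_step_local[OF sg mt \<open>e \<in> M\<close> \<open>u \<in> e\<close>, of b x] by simp
    qed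
    moreover have "(\<Prod>u\<in>{..<n} - \<Union>M. (1 + z * q u) ^ nat (disc_step M b x u)) = R"
      unfolding R_def by (intro prod.cong refl) (simp add: disc_step_unmatched[OF unmatched_of_notin])
    ultimately show ?thesis unfolding Psi_def prod_split[OF sg mt] by simp
  qed
  have eq2: "Psi n z x (cont_step n M q) = (\<Prod>e\<in>M. H e) * R"
  proof -
    have "(\<Prod>u\<in>{..<n} - \<Union>M. (1 + z * cont_step n M q u) ^ nat (x u)) = R"
      unfolding R_def by (intro prod.cong refl) (simp add: cont_step_unmatched[OF unmatched_of_notin])
    then show ?thesis unfolding Psi_def prod_split[OF sg mt] H_def by simp
  qed
  have "(\<integral>\<^sup>+b. ennreal (Psi n z (disc_step M b x) q) \<partial>Pi_pmf M False (\<lambda>_. bernoulli_pmf (1/2)))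
      = (\<integral>\<^sup>+b. (\<Prod>e\<in>M. ennreal (G e (b e))) * ennreal R \<partial>Pi_pmf M False (\<lambda>_. bernoulli_pmf (1/2)))"
    by (simp add: eq1 ennreal_mult R0 G0 prod_nonneg prod_ennreal)
  also have "\<dots> = (\<integral>\<^sup>+b. (\<Prod>e\<in>M. ennreal (G e (b e))) \<partial>Pi_pmf M False (\<lambda>_. bernoulli_pmf (1/2))) * ennreal R"
    by (rule nn_integral_multc) simp
  also have "(\<integral>\<^sup>+b. (\<Prod>e\<in>M. ennreal (G e (b e))) \<partial>Pi_pmf M False (\<lambda>_. bernoulli_pmf (1/2)))
      = (\<Prod>e\<in>M. \<integral>\<^sup>+\<beta>. ennreal (G e \<beta>) \<partial>bernoulli_pmf (1/2))"
    by (rule nn_integral_prod_Pi_pmf[OF finM])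
  also have "\<dots> = (\<Prod>e\<in>M. ennreal (G e True / 2 + G e False / 2))"
  proof (intro prod.cong refl)
    fix e
    show "(\<integral>\<^sup>+\<beta>. ennreal (G e \<beta>) \<partial>bernoulli_pmf (1/2)) = ennreal (G e True / 2 + G e False / 2)"
    proof -
      have "(\<integral>\<^sup>+\<beta>. ennreal (G e \<beta>) \<partial>bernoulli_pmf (1/2)) = ennreal (G e True) / 2 + ennreal (G e False) / 2"
        by (simp add: divide_ennreal_def)
      also have "\<dots> = ennreal (G e True / 2 + G e False / 2)"
        using G0[of e True] G0[of e False]
        by (simp add: ennreal_divide_numeral ennreal_plus[symmetric] del: ennreal_plus)
      finally show ?thesis .
    qed
  qed
  also have "\<dots> * ennreal R = ennreal ((\<Prod>e\<in>M. G e True / 2 + G e False / 2) * R)"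
  proof -
    have nn: "\<And>e. 0 \<le> G e True / 2 + G e False / 2" using G0 by (simp add: add_nonneg_nonneg)
    have "ennreal ((\<Prod>e\<in>M. G e True / 2 + G e False / 2) * R)
        = ennreal (\<Prod>e\<in>M. G e True / 2 + G e False / 2) * ennreal R"
      by (rule ennreal_mult) (use nn R0 in \<open>auto intro: prod_nonneg\<close>)
    also have "ennreal (\<Prod>e\<in>M. G e True / 2 + G e False / 2) = (\<Prod>e\<in>M. ennreal (G e True / 2 + G e False / 2))"
      by (rule prod_ennreal[symmetric]) (use nn in auto)
    finally show ?thesis by (rule sym)
  qed
  also have "\<dots> \<le> ennreal ((\<Prod>e\<in>M. H e) * R)"
  proof (intro ennreal_leI mult_right_mono R0 prod_mono conjI)
    fix e assume "e \<in> M"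
    show "0 \<le> G e True / 2 + G e False / 2" using G0[of e True] G0[of e False] by simp
    show "G e True / 2 + G e False / 2 \<le> H e"
      unfolding G_def H_def by (rule edge_bound[OF sg mt \<open>e \<in> M\<close> xnn qnn z])
  qed
  finally show ?thesis using eq2 by simp
qed


definition drl :: "nat set set list \<Rightarrow> (nat \<Rightarrow> int) \<Rightarrow> (nat \<Rightarrow> int) pmf" where
  "drl ms x0 = foldl (\<lambda>p M. bind_pmf p (disc_step_pmf M)) (return_pmf x0) ms"

lemma drl_Nil: "drl [] x0 = return_pmf x0"
  by (simp add: drl_def)

lemma drl_snoc: "drl (ms @ [M]) x0 = bind_pmf (drl ms x0) (disc_step_pmf M)"
  by (simp add: drl_def)

lemma drl_nonneg:
  assumes sg: "simple_graph n E" and mts: "\<forall>M\<in>set ms. is_matching E M"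
    and x0: "\<forall>u<n. x0 u \<ge> 0"
  shows "x \<in> set_pmf (drl ms x0) \<Longrightarrow> \<forall>u<n. x u \<ge> 0"
  using mts
proof (induction ms arbitrary: x rule: rev_induct)
  case Nil then show ?case using x0 by (simp add: drl_Nil)
next
  case (snoc M ms)
  from snoc.prems obtain y b where y: "y \<in> set_pmf (drl ms x0)" and x: "x = disc_step M b y"
    by (auto simp: drl_snoc disc_step_pmf_def)
  have "\<forall>u<n. y u \<ge> 0" using snoc.IH[OF y] snoc.prems by simp
  moreover have "is_matching E M" using snoc.prems by simp
  ultimately show ?case unfolding x using disc_step_nonneg[OF sg] by blast
qed

lemma drl_bound:
  assumes sg: "simple_graph n E" and mts: "\<forall>M\<in>set ms. is_matching E M"
    and x0: "\<forall>u<n. x0 u \<ge> 0" and z: "z \<ge> 0"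
  shows "(\<forall>u. q u \<ge> 0) \<Longrightarrow>
    (\<integral>\<^sup>+x. ennreal (Psi n z x q) \<partial>drl ms x0) \<le> ennreal (Psi n z x0 (cont_run n (rev ms) q))"
  using mts
proof (induction ms arbitrary: q rule: rev_induct)
  case Nil then show ?case by (simp add: drl_Nil cont_run_def)
next
  case (snoc M ms)
  have mt: "is_matching E M" and mts': "\<forall>M\<in>set ms. is_matching E M" using snoc.prems by auto
  have "(\<integral>\<^sup>+x. ennreal (Psi n z x q) \<partial>drl (ms @ [M]) x0)
      = (\<integral>\<^sup>+y. (\<integral>\<^sup>+b. ennreal (Psi n z (disc_step M b y) q) \<partial>Pi_pmf M False (\<lambda>_. bernoulli_pmf (1/2))) \<partial>drl ms x0)"
    by (simp add: drl_snoc disc_step_pmf_def)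
  also have "\<dots> \<le> (\<integral>\<^sup>+y. ennreal (Psi n z y (cont_step n M q)) \<partial>drl ms x0)"
  proof (rule nn_integral_mono_AE, rule AE_pmfI)
    fix y assume "y \<in> set_pmf (drl ms x0)"
    then have "\<forall>u<n. y u \<ge> 0" using drl_nonneg[OF sg mts' x0] by blast
    then show "(\<integral>\<^sup>+b. ennreal (Psi n z (disc_step M b y) q) \<partial>Pi_pmf M False (\<lambda>_. bernoulli_pmf (1/2)))
               \<le> ennreal (Psi n z y (cont_step n M q))"
      using step_bound[OF sg mt _ _ z] snoc.prems(1) by blast
  qed
  also have "\<dots> \<le> ennreal (Psi n z x0 (cont_run n (rev ms) (cont_step n M q)))"
    by (rule snoc.IH) (use snoc.prems cont_step_nonneg in auto)
  also have "cont_run n (rev ms) (cont_step n M q) = cont_run n (rev (ms @ [M])) q"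
    by (simp add: cont_run_Cons)
  finally show ?case .
qed


lemma q_bound:
  assumes sg: "simple_graph n E" and mts: "\<forall>M\<in>set ms. is_matching E M" and n1: "n \<ge> 1"
    and sm: "smoothing n ms 1 (1 / real n)" and u: "u < n" and w: "w < n"
  shows "cont_run n (rev ms) (\<lambda>v. if v = w then 1 else 0) u \<le> 2 / real n"
proof -
  have "cont_run n (rev ms) (\<lambda>v. if v = w then 1 else 0) u
      = (\<Sum>v<n. (if v = u then 1 else 0) * cont_run n (rev ms) (\<lambda>v. if v = w then 1 else 0) v)"
  proof -
    have e: "\<And>v. (if v = u then 1 else 0) * cont_run n (rev ms) (\<lambda>v. if v = w then 1 else 0) v
       = (if v = u then cont_run n (rev ms) (\<lambda>v. if v = w then 1 else 0) v else 0)" by simp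
    show ?thesis unfolding e using u by (simp add: sum.delta)
  qed
  also have "\<dots> = (\<Sum>v<n. cont_run n ms (\<lambda>v. if v = u then 1 else 0) v * (if v = w then 1 else 0))"
    by (rule cont_run_dual[symmetric])
  also have "\<dots> = cont_run n ms (\<lambda>v. if v = u then 1 else 0) w"
  proof -
    have e: "\<And>v. cont_run n ms (\<lambda>v. if v = u then 1 else 0) v * (if v = w then 1 else 0)
       = (if v = w then cont_run n ms (\<lambda>v. if v = u then 1 else 0) v else 0)" by simp
    show ?thesis unfolding e using w by (simp add: sum.delta)
  qed
  also have "\<dots> \<le> 2 / real n" by (rule entry_bound[OF sg mts n1 sm u w])
  finally show ?thesis .
qed

lemma Psi_x0_bound:
  assumes qnn: "\<forall>u. q u \<ge> 0" and qb: "\<forall>u<n. q u \<le> B" and z: "z \<ge> 0" and B0: "B \<ge> 0"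
    and x0: "\<forall>u<n. x0 u \<ge> 0" and m: "real_of_int (\<Sum>u<n. x0 u) \<le> T"
  shows "Psi n z x0 q \<le> exp (z * B * T)"
proof -
  have "Psi n z x0 q \<le> (\<Prod>u<n. exp (z * B) ^ nat (x0 u))"
    unfolding Psi_def
  proof (intro prod_mono conjI)
    fix u assume u: "u \<in> {..<n}"
    show "0 \<le> (1 + z * q u) ^ nat (x0 u)" using qnn z by simp
    have "1 + z * q u \<le> exp (z * q u)" by (rule exp_ge_add_one_self)
    also have "\<dots> \<le> exp (z * B)" using qb u z by (simp add: mult_left_mono)
    finally show "(1 + z * q u) ^ nat (x0 u) \<le> exp (z * B) ^ nat (x0 u)"
      using qnn z by (intro power_mono) auto
  qed
  also have "\<dots> = exp (z * B) ^ (\<Sum>u<n. nat (x0 u))" by (simp add: power_sum)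
  also have "\<dots> = exp (real (\<Sum>u<n. nat (x0 u)) * (z * B))" by (simp only: exp_of_nat_mult)
  also have "real (\<Sum>u<n. nat (x0 u)) = real_of_int (\<Sum>u<n. x0 u)"
    using x0 by simp
  also have "exp (real_of_int (\<Sum>u<n. x0 u) * (z * B)) \<le> exp (z * B * T)"
  proof -
    have "real_of_int (\<Sum>u<n. x0 u) * (z * B) \<le> T * (z * B)"
      using m z B0 by (intro mult_right_mono) auto
    then show ?thesis by (simp add: mult_ac)
  qed
  finally show ?thesis .
qed

lemma Psi_unit:
  assumes "w < n"
  shows "Psi n z x (\<lambda>v. if v = w then 1 else 0) = (1 + z) ^ nat (x w)"
proof -
  have "Psi n z x (\<lambda>v. if v = w then 1 else 0) = (\<Prod>u<n. if u = w then (1 + z) ^ nat (x w) else 1)"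
    unfolding Psi_def by (intro prod.cong refl) auto
  also have "\<dots> = (1 + z) ^ nat (x w)" using assms by (simp add: prod.delta)
  finally show ?thesis .
qed


lemma main_det:
  assumes sg: "simple_graph n E" and mts: "\<forall>M\<in>set ms. is_matching E M" and n1: "n \<ge> 1"
    and sm: "smoothing n ms 1 (1 / real n)" and x0: "\<forall>u<n. x0 u \<ge> 0"
    and m: "real_of_int (\<Sum>u<n. x0 u) \<le> T" and z: "z \<ge> 0"
  shows "measure_pmf.prob (drl ms x0) {x. \<exists>w<n. x w \<ge> int k}
           \<le> real n * (exp (z * (2 / real n) * T) / (1 + z) ^ k)"
proof -
  define Eb where "Eb = exp (z * (2 / real n) * T)"
  have each: "measure_pmf.prob (drl ms x0) {x. x w \<ge> int k} \<le> Eb / (1 + z) ^ k" if w: "w < n" for w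
  proof -
    define q where "q = cont_run n (rev ms) (\<lambda>v. if v = w then 1 else 0)"
    have qnn: "\<forall>u. q u \<ge> 0" unfolding q_def by (intro allI cont_run_nonneg) auto
    have qb: "\<forall>u<n. q u \<le> 2 / real n" unfolding q_def using q_bound[OF sg mts n1 sm _ w] by blast
    have P: "Psi n z x0 q \<le> Eb" unfolding Eb_def
      by (rule Psi_x0_bound[OF qnn qb z _ x0 m]) simp
    have I: "(\<integral>\<^sup>+x. ennreal (Psi n z x (\<lambda>v. if v = w then 1 else 0)) \<partial>drl ms x0) \<le> ennreal (Psi n z x0 q)"
      unfolding q_def by (rule drl_bound[OF sg mts x0 z]) auto
    define A where "A = {x. x w \<ge> int k}"
    have "ennreal ((1 + z) ^ k) * emeasure (drl ms x0) A
        = (\<integral>\<^sup>+x. ennreal ((1 + z) ^ k) * indicator A x \<partial>drl ms x0)"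
      by (rule nn_integral_cmult_indicator[symmetric]) simp
    also have "\<dots> \<le> (\<integral>\<^sup>+x. ennreal (Psi n z x (\<lambda>v. if v = w then 1 else 0)) \<partial>drl ms x0)"
    proof (rule nn_integral_mono)
      fix x
      show "ennreal ((1 + z) ^ k) * indicator A x \<le> ennreal (Psi n z x (\<lambda>v. if v = w then 1 else 0))"
      proof (cases "x \<in> A")
        case True
        then have "k \<le> nat (x w)" unfolding A_def by simp
        then have "(1 + z) ^ k \<le> (1 + z) ^ nat (x w)" using z by (intro power_increasing) auto
        then show ?thesis using True Psi_unit[OF w] by (simp add: ennreal_leI)
      qed simp
    qed
    also have "\<dots> \<le> ennreal (Psi n z x0 q)" by (rule I)
    also have "\<dots> \<le> ennreal Eb" using P by (rule ennreal_leI)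
    finally have "ennreal ((1 + z) ^ k) * ennreal (measure_pmf.prob (drl ms x0) A) \<le> ennreal Eb"
      by (simp add: measure_pmf.emeasure_eq_measure)
    then have "ennreal ((1 + z) ^ k * measure_pmf.prob (drl ms x0) A) \<le> ennreal Eb"
      using z by (simp add: ennreal_mult)
    then have "(1 + z) ^ k * measure_pmf.prob (drl ms x0) A \<le> Eb"
      unfolding Eb_def by (subst (asm) ennreal_le_iff) auto
    moreover have "(1 + z) ^ k > 0" using z by simp
    ultimately show ?thesis unfolding A_def by (simp add: pos_le_divide_eq mult.commute)
  qed
  have "{x. \<exists>w<n. x w \<ge> int k} = (\<Union>w\<in>{..<n}. {x. x w \<ge> int k})" by auto
  then have "measure_pmf.prob (drl ms x0) {x. \<exists>w<n. x w \<ge> int k}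
      \<le> (\<Sum>w<n. measure_pmf.prob (drl ms x0) {x. x w \<ge> int k})"
    by (simp add: measure_pmf.finite_measure_subadditive_finite)
  also have "\<dots> \<le> (\<Sum>w<n. Eb / (1 + z) ^ k)" by (intro sum_mono each) auto
  also have "\<dots> = real n * (Eb / (1 + z) ^ k)" by simp
  finally show ?thesis unfolding Eb_def .
qed


lemma numeric:
  fixes \<epsilon> :: real and n k :: nat
  assumes e: "\<epsilon> > 0" and k: "9 / \<epsilon> < real k" and n1: "n \<ge> 1" and nb: "exp 1 * 2 ^ k \<le> real n"
  shows "real n * (exp ((real n powr \<epsilon> / 2) * (2 / real n) * (real n powr (1 - \<epsilon>))) / (1 + real n powr \<epsilon> / 2) ^ k)
         \<le> 1 / real n"
proof -
  have np: "real n > 0" using n1 by simp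
  have "real n powr \<epsilon> * real n powr (1 - \<epsilon>) = real n"
    using np by (simp add: powr_add[symmetric])
  then have e1: "(real n powr \<epsilon> / 2) * (2 / real n) * (real n powr (1 - \<epsilon>)) = 1"
    using np by (simp add: field_simps)
  have ek: "9 \<le> \<epsilon> * real k" using k e by (simp add: field_simps)
  have "(real n powr \<epsilon>) ^ k = real n powr (real k * \<epsilon>)" using np by (simp add: powr_power)
  also have "\<dots> \<ge> real n powr 9" using ek n1 by (intro powr_mono) (auto simp: mult.commute)
  also have "real n powr 9 = real n ^ 9" using np by simp
  finally have p9: "real n ^ 9 \<le> (real n powr \<epsilon>) ^ k" .
  have "(real n powr \<epsilon> / 2) ^ k \<le> (1 + real n powr \<epsilon> / 2) ^ k"
    by (intro power_mono) auto
  then have low: "real n ^ 9 / 2 ^ k \<le> (1 + real n powr \<epsilon> / 2) ^ k"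
  proof -
    have "real n ^ 9 / 2 ^ k \<le> (real n powr \<epsilon>) ^ k / 2 ^ k" using p9 by (intro divide_right_mono) auto
    also have "\<dots> = (real n powr \<epsilon> / 2) ^ k" by (simp add: power_divide)
    finally show ?thesis using \<open>(real n powr \<epsilon> / 2) ^ k \<le> _\<close> by linarith
  qed
  have pos: "0 < real n ^ 9 / 2 ^ k" using np by simp
  have "real n * (exp 1 / (1 + real n powr \<epsilon> / 2) ^ k) \<le> real n * (exp 1 / (real n ^ 9 / 2 ^ k))"
  proof -
    have pos2: "0 < (1 + real n powr \<epsilon> / 2) ^ k" by (simp add: add_pos_nonneg)
    have "exp 1 / (1 + real n powr \<epsilon> / 2) ^ k \<le> exp 1 / (real n ^ 9 / 2 ^ k)"
    proof (rule divide_left_mono[OF low])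
      show "0 \<le> exp (1::real)" by simp
      have "0 < (1 + real n powr \<epsilon> / 2) ^ k * (real n ^ 9 / 2 ^ k)" using pos2 pos by (rule mult_pos_pos)
      then show "0 < (1 + real n powr \<epsilon> / 2) ^ k * (real n ^ 9 / 2 ^ k)" .
    qed
    then show ?thesis using np by (intro mult_left_mono) auto
  qed
  also have "\<dots> = (exp 1 * 2 ^ k) / real n ^ 8"
  proof -
    have n9: "real n ^ 9 = real n * real n ^ 8" by (simp add: eval_nat_numeral)
    show ?thesis using np unfolding n9 by (simp add: field_simps)
  qed
  also have "\<dots> \<le> real n / real n ^ 8" using nb np by (intro divide_right_mono) auto
  also have "\<dots> = 1 / real n ^ 7"
  proof -
    have n8: "real n ^ 8 = real n * real n ^ 7" by (simp add: eval_nat_numeral)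
    show ?thesis using np unfolding n8 by (simp add: field_simps)
  qed
  also have "\<dots> \<le> 1 / real n"
  proof -
    have "real n \<le> real n ^ 7" using n1 by (intro power_increasing_iff[THEN iffD2] | simp add: self_le_power)
    then show ?thesis using np by (intro divide_left_mono) auto
  qed
  finally show ?thesis unfolding e1 .
qed


lemma k_gt:
  fixes \<epsilon> :: real assumes "\<epsilon> > 0"
  shows "9 / \<epsilon> < real (nat \<lfloor>9 / \<epsilon>\<rfloor> + 1)"
proof -
  have "9 / \<epsilon> > 0" using assms by simp
  then have "real (nat \<lfloor>9 / \<epsilon>\<rfloor>) = real_of_int \<lfloor>9 / \<epsilon>\<rfloor>" by simp
  then show ?thesis by linarith
qed

lemma disc_good:
  fixes \<epsilon> :: real
  assumes e: "\<epsilon> > 0" and n1: "n \<ge> 1" and nn: "\<forall>u<n. 0 \<le> x u"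
    and lt: "\<not> (\<exists>w<n. x w \<ge> int (nat \<lfloor>9 / \<epsilon>\<rfloor> + 1))"
  shows "int_discrepancy n x \<le> 9 / \<epsilon>"
proof -
  have pos: "9 / \<epsilon> > 0" using e by simp
  have ub: "real_of_int (x w) \<le> 9 / \<epsilon>" if "w < n" for w
  proof -
    have "x w < int (nat \<lfloor>9 / \<epsilon>\<rfloor> + 1)" using lt that by auto
    then have "x w \<le> \<lfloor>9 / \<epsilon>\<rfloor>" using pos by linarith
    then show ?thesis by linarith
  qed
  show ?thesis unfolding int_discrepancy_def
  proof (subst disc_le_iff[OF n1], intro allI impI)
    fix a b assume "a < n" "b < n"
    show "\<bar>real_of_int (x a) - real_of_int (x b)\<bar> \<le> 9 / \<epsilon>"
    proof -
      have "0 \<le> real_of_int (x a)" "0 \<le> real_of_int (x b)" using nn \<open>a < n\<close> \<open>b < n\<close> by auto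
      then show ?thesis using ub[OF \<open>a < n\<close>] ub[OF \<open>b < n\<close>] by (simp add: abs_le_iff)
    qed
  qed
qed

lemma bad_bound:
  fixes \<epsilon> :: real
  assumes e: "\<epsilon> > 0" and sg: "simple_graph n E" and mts: "\<forall>M\<in>set ms. is_matching E M"
    and n1: "n \<ge> 1" and nb: "exp 1 * 2 ^ (nat \<lfloor>9 / \<epsilon>\<rfloor> + 1) \<le> real n"
    and sm: "smoothing n ms 1 (1 / real n)" and x0: "\<forall>u<n. x0 u \<ge> 0"
    and m: "real_of_int (\<Sum>u<n. x0 u) \<le> real n powr (1 - \<epsilon>)"
  shows "measure_pmf.prob (drl ms x0) {x. \<not> int_discrepancy n x \<le> 9 / \<epsilon>} \<le> 1 / real n"
proof -
  define k where "k = nat \<lfloor>9 / \<epsilon>\<rfloor> + 1"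
  define z where "z = real n powr \<epsilon> / 2"
  have "measure_pmf.prob (drl ms x0) {x. \<not> int_discrepancy n x \<le> 9 / \<epsilon>}
      \<le> measure_pmf.prob (drl ms x0) {x. \<exists>w<n. x w \<ge> int k}"
  proof (rule measure_pmf.finite_measure_mono_AE)
    show "AE x in measure_pmf (drl ms x0). x \<in> {x. \<not> int_discrepancy n x \<le> 9 / \<epsilon>} \<longrightarrow> x \<in> {x. \<exists>w<n. x w \<ge> int k}"
    proof (rule AE_pmfI, intro impI)
      fix x assume xs: "x \<in> set_pmf (drl ms x0)" and bad: "x \<in> {x. \<not> int_discrepancy n x \<le> 9 / \<epsilon>}"
      have "\<forall>u<n. 0 \<le> x u" using drl_nonneg[OF sg mts x0 xs] .
      then show "x \<in> {x. \<exists>w<n. x w \<ge> int k}" using disc_good[OF e n1] bad unfolding k_def by blast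
    qed
  qed simp
  also have "\<dots> \<le> real n * (exp (z * (2 / real n) * (real n powr (1 - \<epsilon>))) / (1 + z) ^ k)"
    by (rule main_det[OF sg mts n1 sm x0 m]) (simp add: z_def)
  also have "\<dots> \<le> 1 / real n" unfolding z_def
    by (rule numeric[OF e _ n1]) (use k_gt[OF e] nb in \<open>auto simp: k_def\<close>)
  finally show ?thesis .
qed

lemma bc_eq: "disc_run (\<lambda>t. return_pmf (Ms (t mod d))) x0 T = drl (bc_schedule Ms d T) x0"
  by (induction T) (simp_all add: drl_Nil drl_snoc bc_schedule_def bind_return_pmf)

lemma rm_eq: "disc_run (\<lambda>_. D) x0 T = bind_pmf (iid_matchings D T) (\<lambda>ms. drl ms x0)"
proof (induction T)
  case 0 then show ?case by (simp add: drl_Nil bind_return_pmf)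
next
  case (Suc T)
  have "disc_run (\<lambda>_. D) x0 (Suc T)
      = bind_pmf (iid_matchings D T) (\<lambda>ms. bind_pmf (drl ms x0) (\<lambda>x. bind_pmf D (\<lambda>M. disc_step_pmf M x)))"
    by (simp add: Suc bind_assoc_pmf)
  also have "\<dots> = bind_pmf (iid_matchings D T) (\<lambda>ms. bind_pmf D (\<lambda>M. bind_pmf (drl ms x0) (disc_step_pmf M)))"
    by (subst bind_commute_pmf) simp
  also have "\<dots> = bind_pmf (iid_matchings D (Suc T)) (\<lambda>ms. drl ms x0)"
    by (simp add: bind_assoc_pmf bind_map_pmf drl_snoc)
  finally show ?case .
qed

lemma iid_support: "ms \<in> set_pmf (iid_matchings D T) \<Longrightarrow> set ms \<subseteq> set_pmf D"
  by (induction T arbitrary: ms) fastforce+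


theorem corollary3p4:
  fixes \<epsilon> c :: real
  assumes "\<epsilon> > 0" and "c > 0"
  shows "\<exists>n0. \<forall>n \<ge> n0. \<forall>E. simple_graph n E \<longrightarrow>
     (\<forall>x0 :: nat \<Rightarrow> int.
        (\<forall>u<n. x0 u \<ge> 0) \<longrightarrow> real_of_int (\<Sum>u<n. x0 u) \<le> real n powr (1 - \<epsilon>) \<longrightarrow>
        \<comment> \<open>balancing circuit model\<close>
        (\<forall>Ms d. d \<ge> 1 \<longrightarrow> (\<forall>i<d. is_matching E (Ms i)) \<longrightarrow>
           (\<exists>t. smoothing n (bc_schedule Ms d t) 1 (1 / real n)) \<longrightarrow>
           measure_pmf.prob
             (disc_run (\<lambda>t. return_pmf (Ms (t mod d))) x0 (tau_cont_bc n Ms d 1 (1 / real n)))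
             {x. int_discrepancy n x \<le> 9 / \<epsilon>} \<ge> 1 - 2 / real n)
        \<and>
        \<comment> \<open>random matching model, p_min \<ge> c / Delta\<close>
        (\<forall>D. (\<forall>M \<in> set_pmf D. is_matching E M) \<longrightarrow>
           (\<forall>e\<in>E. measure_pmf.prob D {M. e \<in> M} \<ge> c / real (max_degree n E)) \<longrightarrow>
           (\<exists>t. rm_smoothing_whp n D 1 (1 / real n) t) \<longrightarrow>
           measure_pmf.prob
             (disc_run (\<lambda>_. D) x0 (tau_cont_rm n D 1 (1 / real n)))
             {x. int_discrepancy n x \<le> 9 / \<epsilon>} \<ge> 1 - 2 / real n))"
proof -
  have e: "\<epsilon> > 0" by fact
  define k where "k = nat \<lfloor>9 / \<epsilon>\<rfloor> + 1"
  define n0 where "n0 = max 1 (nat \<lceil>exp (1::real) * 2 ^ k\<rceil>)"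
  define B where "B = (\<lambda>n. {x. \<not> int_discrepancy n x \<le> 9 / \<epsilon>})"
  have good: "{x. int_discrepancy n x \<le> 9 / \<epsilon>} = UNIV - B n" for n unfolding B_def by auto
  have compl: "measure_pmf.prob p {x. int_discrepancy n x \<le> 9 / \<epsilon>} = 1 - measure_pmf.prob p (B n)"
    for p n unfolding good using measure_pmf.prob_compl[of "B n" p] by simp
  show ?thesis
  proof (intro exI[of _ n0] allI impI conjI)
    fix n E and x0 :: "nat \<Rightarrow> int"
    assume nn0: "n \<ge> n0" and sg: "simple_graph n E" and x0: "\<forall>u<n. x0 u \<ge> 0"
      and m: "real_of_int (\<Sum>u<n. x0 u) \<le> real n powr (1 - \<epsilon>)"
    have n1: "n \<ge> 1" using nn0 unfolding n0_def by simp
    have nb: "exp 1 * 2 ^ (nat \<lfloor>9 / \<epsilon>\<rfloor> + 1) \<le> real n"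
    proof -
      have "exp (1::real) * 2 ^ k \<le> real (nat \<lceil>exp (1::real) * 2 ^ k\<rceil>)" by linarith
      also have "\<dots> \<le> real n" using nn0 unfolding n0_def by (metis max.bounded_iff of_nat_le_iff)
      finally show ?thesis unfolding k_def .
    qed
    {
      fix Ms d
      assume d: "d \<ge> 1" and mt: "\<forall>i<d. is_matching E (Ms i)"
        and ex: "\<exists>t. smoothing n (bc_schedule Ms d t) 1 (1 / real n)"
      define T where "T = tau_cont_bc n Ms d 1 (1 / real n)"
      have smT: "smoothing n (bc_schedule Ms d T) 1 (1 / real n)"
        unfolding T_def tau_cont_bc_def using ex by (rule LeastI_ex)
      have mts: "\<forall>M\<in>set (bc_schedule Ms d T). is_matching E M"
        using mt d by (auto simp: bc_schedule_def)
      have "measure_pmf.prob (drl (bc_schedule Ms d T) x0) (B n) \<le> 1 / real n"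
        unfolding B_def by (rule bad_bound[OF e sg mts n1 nb smT x0 m])
      then have "measure_pmf.prob (disc_run (\<lambda>t. return_pmf (Ms (t mod d))) x0 T) {x. int_discrepancy n x \<le> 9 / \<epsilon>}
          \<ge> 1 - 1 / real n" by (simp add: compl bc_eq)
      moreover have "1 - 2 / real n \<le> 1 - 1 / real n" using n1 by (simp add: divide_right_mono)
      ultimately show "measure_pmf.prob (disc_run (\<lambda>t. return_pmf (Ms (t mod d))) x0 (tau_cont_bc n Ms d 1 (1 / real n)))
             {x. int_discrepancy n x \<le> 9 / \<epsilon>} \<ge> 1 - 2 / real n" unfolding T_def by linarith
    }
    {
      fix D :: "nat set set pmf"
      assume mD: "\<forall>M \<in> set_pmf D. is_matching E M"
        and ex: "\<exists>t. rm_smoothing_whp n D 1 (1 / real n) t"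
      define T where "T = tau_cont_rm n D 1 (1 / real n)"
      define S where "S = {ms. smoothing n ms 1 (1 / real n)}"
      have whp: "measure_pmf.prob (iid_matchings D T) S \<ge> 1 - 1 / real n"
        using LeastI_ex[OF ex] unfolding T_def tau_cont_rm_def rm_smoothing_whp_def S_def .
      have cS: "measure_pmf.prob (iid_matchings D T) (UNIV - S) \<le> 1 / real n"
        using whp measure_pmf.prob_compl[of S "iid_matchings D T"] by simp
      have "emeasure (measure_pmf (disc_run (\<lambda>_. D) x0 T)) (B n)
          = (\<integral>\<^sup>+ms. emeasure (measure_pmf (drl ms x0)) (B n) \<partial>iid_matchings D T)"
        by (simp add: rm_eq)
      also have "\<dots> \<le> (\<integral>\<^sup>+ms. (indicator (UNIV - S) ms + ennreal (1 / real n)) \<partial>iid_matchings D T)"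
      proof (rule nn_integral_mono_AE, rule AE_pmfI)
        fix ms assume ms: "ms \<in> set_pmf (iid_matchings D T)"
        show "emeasure (measure_pmf (drl ms x0)) (B n) \<le> indicator (UNIV - S) ms + ennreal (1 / real n)"
        proof (cases "ms \<in> S")
          case True
          have mts: "\<forall>M\<in>set ms. is_matching E M" using iid_support[OF ms] mD by blast
          have sm: "smoothing n ms 1 (1 / real n)" using True unfolding S_def by simp
          have "measure_pmf.prob (drl ms x0) (B n) \<le> 1 / real n"
            unfolding B_def by (rule bad_bound[OF e sg mts n1 nb sm x0 m])
          then show ?thesis using True
            by (simp add: measure_pmf.emeasure_eq_measure ennreal_leI)
        next
          case False
          have "emeasure (measure_pmf (drl ms x0)) (B n) \<le> 1"
            by (simp add: measure_pmf.emeasure_le_1)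
          also have "\<dots> \<le> indicator (UNIV - S) ms + ennreal (1 / real n)" using False by simp
          finally show ?thesis .
        qed
      qed
      also have "\<dots> = emeasure (measure_pmf (iid_matchings D T)) (UNIV - S) + ennreal (1 / real n)"
        by (subst nn_integral_add) (auto simp: measure_pmf.emeasure_space_1)
      also have "\<dots> = ennreal (measure_pmf.prob (iid_matchings D T) (UNIV - S)) + ennreal (1 / real n)"
        by (simp add: measure_pmf.emeasure_eq_measure)
      also have "\<dots> \<le> ennreal (1 / real n) + ennreal (1 / real n)"
        using cS by (intro add_mono ennreal_leI) auto
      also have "\<dots> = ennreal (2 / real n)" by (simp add: ennreal_plus[symmetric] del: ennreal_plus)
      finally have "ennreal (measure_pmf.prob (disc_run (\<lambda>_. D) x0 T) (B n)) \<le> ennreal (2 / real n)"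
        by (simp add: measure_pmf.emeasure_eq_measure)
      then have "measure_pmf.prob (disc_run (\<lambda>_. D) x0 T) (B n) \<le> 2 / real n"
        by (subst (asm) ennreal_le_iff) auto
      then show "measure_pmf.prob (disc_run (\<lambda>_. D) x0 (tau_cont_rm n D 1 (1 / real n)))
             {x. int_discrepancy n x \<le> 9 / \<epsilon>} \<ge> 1 - 2 / real n"
        unfolding T_def[symmetric] by (simp add: compl)
    }
  qed
qed

end
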